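(* Let $n$ be the number of worker nodes, let $\tilde q\ge n$ be a prime, and let $1\le k_A\le n$. Let $\mathbf{P}$ be the $\tilde q\times\tilde q$ circulant permutation matrix whose first row is $[0\ 1\ 0\ \cdots\ 0]$ and whose row $i$ is the first row cyclically shifted by $i$. Split $\mathbf{A}\in\mathbb{R}^{t\times r}$ into $k_A(\tilde q-1)$ equal block-columns $\mathbf{A}_{\langle i,j\rangle}$, $i\in\{0,\dots,k_A-1\}$, $j\in\{0,\dots,\tilde q-2\}$, and define $\mathbf{A}_{\langle i,\tilde q-1\rangle} = -\sum_{j=0}^{\tilde q-2}\mathbf{A}_{\langle i,j\rangle}$. Let $\mathbf{G}^{circ}$ be the $k_A\tilde q\times n\tilde q$ matrix with $(i,j)$-th $\tilde q\times\tilde q$ block $\mathbf{P}^{ji}$. Worker $i$ stores $\hat{\mathbf{A}}_{\langle i,j\rangle}=\sum_{\alpha,\beta}\mathbf{G}^{circ}(\alpha\tilde q+\beta, i\tilde q+j)\mathbf{A}_{\langle\alpha,\beta\rangle}$ for $j\in\{0,\dots,\tilde q-1\}$ and $\mathbf{x}$, and returns $\hat{\mathbf{A}}_{\langle i,j\rangle}^T\mathbf{x}$. Then the threshold of the scheme is $k_A$: for any distinct $i_0,\dots,i_{k_A-1}\in\{0,\dots,n-1\}$ and any coordinate position, the vector $\mathbf{m}=[\mathbf{m}_{\langle\alpha,\beta\rangle}]\in\mathbb{R}^{1\times k_A\tilde q}$ of the corresponding entries of $\mathbf{A}_{\langle\alpha,\beta\rangle}^T\mathbf{x}$ is uniquely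 determined by $\mathbf{c}=\mathbf{m}\tilde{\mathbf{G}}$ (where $\tilde{\mathbf{G}}$ consists of block-columns $i_0,\dots,i_{k_A-1}$ of $\mathbf{G}^{circ}$), and it is computed by the following procedure: apply the $\tilde q$-point DFT to each length-$\tilde q$ block $\mathbf{c}_{i_b}$ of $\mathbf{c}$; for each $k\in\{1,\dots,\tilde q-1\}$ collect the $k$-th Fourier coefficients of the $k_A$ blocks and solve the $k_A\times k_A$ system with matrix $\tilde{\mathbf{G}}^{\mathcal F}_d[k]$ whose $(a,b)$ entry is $\omega_{\tilde q}^{a i_b k}$ ($a,b\in\{0,\dots,k_A-1\}$); set the $0$-th Fourier coefficients of all blocks of $\mathbf{m}$ to zero; undo the regrouping and apply the inverse DFT to each block. Each $\tilde{\mathbf{G}}^{\mathcal F}_d[k]$ is nonsingular, and the worst-case condition number of these recovery matrices is at most $O(\tilde q^{\,\tilde q-k_A+c_1})$ with $c_1=5.5$.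
   Context: $\omega_{\tilde q}=e^{\mathrm{i}2\pi/\tilde q}$; the $\tilde q$-point DFT matrix is $\mathbf{W}(i,j)=\omega_{\tilde q}^{ij}/\sqrt{\tilde q}$. For a square matrix, $\kappa(\mathbf{M})=\|\mathbf{M}\|\|\mathbf{M}^{-1}\|$ with $\|\cdot\|$ the largest singular value. A scheme has threshold $\tau$ if the master node can decode $\mathbf{A}^T\mathbf{x}$ from the results of any $\tau$ workers. *)

theory Defs
  imports "HOL-Analysis.Analysis" "Jordan_Normal_Form.Determinant"
begin

definition omega :: "nat \<Rightarrow> complex" where
  "omega q = cis (2 * pi / real q)"

definition circP :: "nat \<Rightarrow> real mat" where
  "circP q = mat q q (\<lambda>(a, b). if b = (a + 1) mod q then 1 else 0)"

definition Gcirc :: "nat \<Rightarrow> nat \<Rightarrow> nat \<Rightarrow> real mat" where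
  "Gcirc kA n q = mat (kA * q) (n * q)
     (\<lambda>(r, s). (circP q ^\<^sub>m ((s div q) * (r div q))) $$ (r mod q, s mod q))"

(* block-column A_<alpha,beta> (t x w) of A, for beta < q-1; the last one is minus the sum.
   Block-columns are ordered lexicographically: block number alpha*(q-1)+beta. *)
definition Ablk :: "nat \<Rightarrow> nat \<Rightarrow> (nat \<Rightarrow> nat \<Rightarrow> real) \<Rightarrow> nat \<Rightarrow> nat \<Rightarrow> nat \<Rightarrow> nat \<Rightarrow> real" where
  "Ablk q w A \<alpha> \<beta> s p =
     (if \<beta> < q - 1 then A s ((\<alpha> * (q - 1) + \<beta>) * w + p)
      else - (\<Sum>\<beta>'<q - 1. A s ((\<alpha> * (q - 1) + \<beta>') * w + p)))"

definition Ahat :: "nat \<Rightarrow> nat \<Rightarrow> nat \<Rightarrow> nat \<Rightarrow> (nat \<Rightarrow> nat \<Rightarrow> real) \<Rightarrow> nat \<Rightarrow> nat \<Rightarrow> nat \<Rightarrow> nat \<Rightarrow> real" where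
  "Ahat kA n q w A i j s p =
     (\<Sum>\<alpha><kA. \<Sum>\<beta><q. Gcirc kA n q $$ (\<alpha> * q + \<beta>, i * q + j) * Ablk q w A \<alpha> \<beta> s p)"

definition matT_x :: "nat \<Rightarrow> (nat \<Rightarrow> nat \<Rightarrow> real) \<Rightarrow> (nat \<Rightarrow> real) \<Rightarrow> nat \<Rightarrow> real" where
  "matT_x t M x p = (\<Sum>s<t. M s p * x s)"

definition dft :: "nat \<Rightarrow> (nat \<Rightarrow> complex) \<Rightarrow> nat \<Rightarrow> complex" where
  "dft q f k = (\<Sum>j<q. (omega q ^ (k * j) / complex_of_real (sqrt (real q))) * f j)"

definition idft :: "nat \<Rightarrow> (nat \<Rightarrow> complex) \<Rightarrow> nat \<Rightarrow> complex" where
  "idft q g j = (\<Sum>k<q. (cnj (omega q) ^ (j * k) / complex_of_real (sqrt (real q))) * g k)"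

definition GFd :: "nat \<Rightarrow> nat \<Rightarrow> (nat \<Rightarrow> nat) \<Rightarrow> nat \<Rightarrow> complex mat" where
  "GFd q kA idx k = mat kA kA (\<lambda>(a, b). omega q ^ (a * idx b * k))"

(* Decoding procedure. c b j = j-th entry of block c_{i_b}.  Returns m_<alpha,j>. *)
definition decode :: "nat \<Rightarrow> nat \<Rightarrow> (nat \<Rightarrow> nat) \<Rightarrow> (nat \<Rightarrow> nat \<Rightarrow> real) \<Rightarrow> nat \<Rightarrow> nat \<Rightarrow> complex" where
  "decode q kA idx c \<alpha> j =
     (let chat = (\<lambda>b. dft q (\<lambda>j'. complex_of_real (c b j')));
          mhat = (\<lambda>k. if k = 0 then 0\<^sub>v kA
                      else (THE y. y \<in> carrier_vec kA \<and>
                              (\<forall>b<kA. (\<Sum>a<kA. y $ a * GFd q kA idx k $$ (a, b)) = chat b k)))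
      in idft q (\<lambda>k. mhat k $ \<alpha>) j)"

definition vnorm2 :: "complex vec \<Rightarrow> real" where
  "vnorm2 v = sqrt (\<Sum>i<dim_vec v. (cmod (v $ i))\<^sup>2)"

definition spec_norm :: "complex mat \<Rightarrow> real" where
  "spec_norm M = Sup {vnorm2 (M *\<^sub>v v) | v. v \<in> carrier_vec (dim_col M) \<and> vnorm2 v = 1}"

definition mat_inv :: "complex mat \<Rightarrow> complex mat" where
  "mat_inv M = (THE B. B \<in> carrier_mat (dim_row M) (dim_row M) \<and> inverts_mat M B \<and> inverts_mat B M)"

definition cond_num :: "complex mat \<Rightarrow> real" where
  "cond_num M = spec_norm M * spec_norm (mat_inv M)"

end

theory Submission
  imports Defs "HOL-Computational_Algebra.Polynomial"
begin



lemma omega_pow: "omega q ^ j = cis (2 * pi * real j / real q)"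
  unfolding omega_def Complex.DeMoivre by (simp add: mult_ac)

lemma norm_omega_pow [simp]: "cmod (omega q ^ j) = 1"
  by (simp add: omega_pow)

lemma omega_q: "q > 0 \<Longrightarrow> omega q ^ q = 1"
proof -
  assume "q > 0"
  then have "2 * pi * real q / real q = 2 * pi" by simp
  then show ?thesis by (simp add: omega_pow cis_2pi)
qed

lemma omega_mod: "q > 0 \<Longrightarrow> omega q ^ (j mod q) = omega q ^ j"
proof -
  assume q: "q > 0"
  have "omega q ^ j = omega q ^ (q * (j div q) + j mod q)" by simp
  also have "\<dots> = (omega q ^ q) ^ (j div q) * omega q ^ (j mod q)"
    by (simp only: power_add power_mult)
  finally show ?thesis using omega_q[OF q] by simp
qed

lemma sin_pi_q: assumes "q \<ge> 2" shows "sin (pi / real q) \<ge> 1 / real q"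
proof -
  define y where "y = pi / real q"
  have y0: "y > 0" using assms by (simp add: y_def)
  have y2: "y \<le> pi / 2" using assms by (simp add: y_def field_simps)
  have "(\<Sum>m<3. sin_coeff m * y ^ m) = y"
    by (simp add: eval_nat_numeral sin_coeff_def)
  then have "\<bar>sin y - y\<bar> \<le> inverse (fact 3) * \<bar>y\<bar> ^ 3"
    using Maclaurin_sin_bound[of y 3] by simp
  then have "\<bar>sin y - y\<bar> \<le> y ^ 3 / 6" using y0 by (simp add: fact_numeral)
  then have "sin y \<ge> y - y ^ 3 / 6" using abs_ge_minus_self[of "sin y - y"] by linarith
  moreover have "y ^ 2 \<le> 4"
  proof -
    have "y \<le> 2" using y2 pi_less_4 by simp
    then show ?thesis using y0 by (metis power_mono less_imp_le numeral_power_le_of_nat_cancel_iff power2_eq_square real_sqrt_four real_sqrt_pow2 zero_le_numeral)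
  qed
  then have "y ^ 3 / 6 \<le> y * (2/3)" using y0 by (simp add: power3_eq_cube power2_eq_square mult_left_mono)
  ultimately have "sin y \<ge> y / 3" by simp
  moreover have "y / 3 \<ge> 1 / real q" using pi_gt3 assms by (simp add: y_def field_simps)
  ultimately show ?thesis unfolding y_def by simp
qed

lemma sin_pi_d: assumes "q \<ge> 2" "1 \<le> d" "d < q"
  shows "sin (pi * real d / real q) \<ge> 1 / real q"
proof -
  have key: "sin (pi * real d' / real q) \<ge> 1 / real q" if "1 \<le> d'" "2 * d' \<le> q" for d'
  proof -
    have "sin (pi / real q) \<le> sin (pi * real d' / real q)"
      apply (rule sin_monotone_2pi_le)
      using that assms pi_gt_zero by (auto simp: field_simps intro: mult_nonneg_nonneg order.trans[of _ 0])
    then show ?thesis using sin_pi_q[OF assms(1)] by simp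
  qed
  show ?thesis
  proof (cases "2 * d \<le> q")
    case True then show ?thesis using key assms by simp
  next
    case False
    have "sin (pi * real d / real q) = sin (pi - pi * real (q - d) / real q)"
      using assms by (simp add: of_nat_diff field_simps)
    also have "\<dots> = sin (pi * real (q - d) / real q)" by simp
    finally show ?thesis using key[of "q - d"] False assms by simp
  qed
qed

lemma cmod_cis_minus_1: "(cmod (cis t - 1))^2 = 4 * (sin (t/2))^2"
proof -
  have "(cmod (cis t - 1))^2 = (cos t - 1)^2 + (sin t)^2"
    by (simp add: cmod_power2)
  also have "\<dots> = 2 - 2 * cos t" using sin_cos_squared_add[of t]
    by (simp add: power2_eq_square algebra_simps)
  also have "cos t = cos (2 * (t/2))" by simp
  also have "\<dots> = 1 - 2 * (sin (t/2))^2" by (rule cos_double_sin)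
  finally show ?thesis by simp
qed

lemma omega_dist: assumes "q \<ge> 2" "j < q" "l < q" "j \<noteq> l"
  shows "cmod (omega q ^ j - omega q ^ l) \<ge> 2 / real q"
proof -
  have gen: "cmod (omega q ^ j - omega q ^ l) \<ge> 2 / real q" if "l < j" "j < q" for j l
  proof -
    define d where "d = j - l"
    have d: "1 \<le> d" "d < q" using that by (auto simp: d_def)
    have "omega q ^ j = omega q ^ l * omega q ^ d" using that by (simp add: d_def flip: power_add)
    then have "omega q ^ j - omega q ^ l = omega q ^ l * (omega q ^ d - 1)" by (simp add: algebra_simps)
    then have e: "cmod (omega q ^ j - omega q ^ l) = cmod (cis (2 * pi * real d / real q) - 1)"
      by (simp add: norm_mult omega_pow)
    have "(cmod (cis (2 * pi * real d / real q) - 1))^2 = 4 * (sin (pi * real d / real q))^2"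
      using cmod_cis_minus_1[of "2 * pi * real d / real q"] by simp
    moreover have "sin (pi * real d / real q) \<ge> 1 / real q" using sin_pi_d[OF assms(1) d] .
    then have "(sin (pi * real d / real q))^2 \<ge> (1 / real q)^2"
      using assms(1) by (intro power_mono) auto
    ultimately have "(cmod (cis (2 * pi * real d / real q) - 1))^2 \<ge> (2 / real q)^2"
      by (simp add: power_divide)
    then have "cmod (cis (2 * pi * real d / real q) - 1) \<ge> 2 / real q"
      by (meson norm_ge_zero power2_le_imp_le)
    then show ?thesis using e by simp
  qed
  show ?thesis
  proof (cases "l < j")
    case True then show ?thesis using gen assms by simp
  next
    case False then have "j < l" using assms by simp
    then show ?thesis using gen[of j l] assms by (simp add: norm_minus_commute)
  qed
qed

lemma omega_inj: assumes "q \<ge> 2" "j < q" "l < q" "omega q ^ j = omega q ^ l" shows "j = l"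
  using omega_dist[of q j l] assms by (cases "j = l") auto

lemma omega_orth: assumes "q \<ge> 2" "l < q" "a < q"
  shows "(\<Sum>k<q. (omega q ^ l * cnj (omega q) ^ a) ^ k) = (if l = a then of_nat q else 0)"
proof -
  have cw: "cnj (omega q) ^ a * omega q ^ a = 1"
    by (metis complex_norm_square norm_omega_pow complex_cnj_power mult.commute of_real_1 power_one)
  show ?thesis
  proof (cases "l = a")
    case True then show ?thesis using cw by (simp add: mult.commute)
  next
    case False
    define r where "r = omega q ^ l * cnj (omega q) ^ a"
    have "r \<noteq> 1"
    proof
      assume "r = 1"
      then have "omega q ^ l * cnj (omega q) ^ a * omega q ^ a = omega q ^ a" by (simp add: r_def)
      then have "omega q ^ l = omega q ^ a" using cw by (simp add: mult.assoc)
      then show False using omega_inj[OF assms(1,2,3)] False by simp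
    qed
    have "r ^ q = (omega q ^ q) ^ l * cnj (omega q ^ q) ^ a"
      by (simp add: r_def power_mult_distrib complex_cnj_power flip: power_mult) (simp add: mult.commute)
    then have "r ^ q = 1" using omega_q assms by simp
    then show ?thesis using geometric_sum[OF \<open>r \<noteq> 1\<close>, of q] False by (simp add: r_def)
  qed
qed



lemma circP_dims [simp]: "dim_row (circP q) = q" "dim_col (circP q) = q"
  by (simp_all add: circP_def)

lemma circP_entry: "l < q \<Longrightarrow> j < q \<Longrightarrow> circP q $$ (l, j) = (if j = (l + 1) mod q then 1 else 0)"
  unfolding circP_def by (simp only: index_mat split)

lemma mult_entry: "A \<in> carrier_mat q q \<Longrightarrow> B \<in> carrier_mat q q \<Longrightarrow> i < q \<Longrightarrow> j < q \<Longrightarrow>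
  (A * B) $$ (i, j) = (\<Sum>l<q. A $$ (i, l) * B $$ (l, j))"
  by (auto simp: index_mult_mat scalar_prod_def lessThan_atLeast0 intro!: sum.cong)



lemma circP_carrier1: "circP q \<in> carrier_mat q q"
  unfolding circP_def by (rule mat_carrier)
lemma circP_carrier: "circP q ^\<^sub>m e \<in> carrier_mat q q" "circP q \<in> carrier_mat q q"
  using circP_carrier1 pow_carrier_mat by blast+

lemma circP_step: assumes IH: "\<And>l. l < q \<Longrightarrow> (M::real mat) $$ (\<beta>, l) = (if l = (\<beta> + e) mod q then 1 else 0)"
  and j: "j < q"
  shows "(\<Sum>l<q. M $$ (\<beta>, l) * circP q $$ (l, j)) = (\<Sum>l<q. if l = (\<beta> + e) mod q then (if j = (l + 1) mod q then 1 else 0) else 0)"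
  apply (rule sum.cong[OF refl])
  using IH j circP_entry[of _ q j] by simp

lemma circP_pow:
  assumes "q > 0"
  shows "\<beta> < q \<Longrightarrow> j < q \<Longrightarrow> (circP q ^\<^sub>m e) $$ (\<beta>, j) = (if j = (\<beta> + e) mod q then 1 else 0)"
proof (induction e arbitrary: \<beta> j)
  case 0
  then show ?case by simp
next
  case (Suc e)
  have "(circP q ^\<^sub>m Suc e) $$ (\<beta>, j) = (\<Sum>l<q. (circP q ^\<^sub>m e) $$ (\<beta>, l) * circP q $$ (l, j))"
    using Suc.prems circP_carrier by (simp only: pow_mat.simps mult_entry)
  also have "\<dots> = (\<Sum>l<q. if l = (\<beta> + e) mod q then (if j = (l + 1) mod q then 1 else 0) else 0)"
    by (rule circP_step[OF Suc.IH[OF Suc.prems(1)] Suc.prems(2)])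
  also have "\<dots> = (if j = ((\<beta> + e) mod q + 1) mod q then 1 else 0)"
    using assms by (subst sum.delta) auto
  also have "\<dots> = (if j = (\<beta> + Suc e) mod q then 1 else 0)" by (simp add: mod_Suc_eq)
  finally show ?case .
qed


lemma Gcirc_entry:
  assumes "q > 0" "\<alpha> < kA" "\<beta> < q" "i < n" "j < q"
  shows "Gcirc kA n q $$ (\<alpha> * q + \<beta>, i * q + j) = (if j = (\<beta> + i * \<alpha>) mod q then 1 else 0)"
proof -
  have r: "\<alpha> * q + \<beta> < kA * q"
  proof -
    have "\<alpha> * q + \<beta> < (\<alpha> + 1) * q" using assms by simp
    also have "\<dots> \<le> kA * q" using assms by (intro mult_right_mono) auto
    finally show ?thesis .
  qed
  have s: "i * q + j < n * q"
  proof -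
    have "i * q + j < (i + 1) * q" using assms by simp
    also have "\<dots> \<le> n * q" using assms by (intro mult_right_mono) auto
    finally show ?thesis .
  qed
  have d1: "(\<alpha> * q + \<beta>) div q = \<alpha>" "(\<alpha> * q + \<beta>) mod q = \<beta>" using assms by auto
  have d2: "(i * q + j) div q = i" "(i * q + j) mod q = j" using assms by auto
  have "Gcirc kA n q $$ (\<alpha> * q + \<beta>, i * q + j) = (circP q ^\<^sub>m (i * \<alpha>)) $$ (\<beta>, j)"
    unfolding Gcirc_def using r s by (simp only: index_mat d1 d2 split)
  then show ?thesis using assms circP_pow[of q \<beta> j "i * \<alpha>"] by simp
qed


lemma swap3: "(\<Sum>s\<in>S. \<Sum>a\<in>A. \<Sum>b\<in>B. f s a b) = (\<Sum>a\<in>A. \<Sum>b\<in>B. \<Sum>s\<in>S. f s a b)"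
proof -
  have "(\<Sum>s\<in>S. \<Sum>a\<in>A. \<Sum>b\<in>B. f s a b) = (\<Sum>a\<in>A. \<Sum>s\<in>S. \<Sum>b\<in>B. f s a b)" by (rule sum.swap)
  also have "\<dots> = (\<Sum>a\<in>A. \<Sum>b\<in>B. \<Sum>s\<in>S. f s a b)" by (rule sum.cong[OF refl], rule sum.swap)
  finally show ?thesis .
qed

lemma partA:
  "matT_x t (Ahat kA n q w A i j) x p =
   (\<Sum>\<alpha><kA. \<Sum>\<beta><q. matT_x t (Ablk q w A \<alpha> \<beta>) x p * Gcirc kA n q $$ (\<alpha> * q + \<beta>, i * q + j))"
proof -
  let ?G = "\<lambda>\<alpha> \<beta>. Gcirc kA n q $$ (\<alpha> * q + \<beta>, i * q + j)"
  have "matT_x t (Ahat kA n q w A i j) x p = (\<Sum>s<t. \<Sum>\<alpha><kA. \<Sum>\<beta><q. ?G \<alpha> \<beta> * Ablk q w A \<alpha> \<beta> s p * x s)"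
    unfolding matT_x_def Ahat_def by (simp add: sum_distrib_right)
  also have "\<dots> = (\<Sum>\<alpha><kA. \<Sum>\<beta><q. \<Sum>s<t. ?G \<alpha> \<beta> * Ablk q w A \<alpha> \<beta> s p * x s)"
    by (rule swap3)
  also have "\<dots> = (\<Sum>\<alpha><kA. \<Sum>\<beta><q. matT_x t (Ablk q w A \<alpha> \<beta>) x p * ?G \<alpha> \<beta>)"
    unfolding matT_x_def by (simp add: sum_distrib_right sum_distrib_left mult_ac)
  finally show ?thesis .
qed



lemma dft_shift:
  assumes "q > 0"
  shows "(\<Sum>j<q. omega q ^ (k * j) * (\<Sum>\<beta><q. f \<beta> * (if j = (\<beta> + e) mod q then 1 else 0)))
       = omega q ^ (k * e) * (\<Sum>\<beta><q. omega q ^ (k * \<beta>) * f \<beta>)"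
proof -
  have "(\<Sum>j<q. omega q ^ (k * j) * (\<Sum>\<beta><q. f \<beta> * (if j = (\<beta> + e) mod q then 1 else 0)))
      = (\<Sum>\<beta><q. \<Sum>j<q. f \<beta> * (if j = (\<beta> + e) mod q then omega q ^ (k * j) else 0))"
    unfolding sum_distrib_left by (rule sum.swap[THEN trans], intro sum.cong refl) (simp add: mult_ac)
  also have "\<dots> = (\<Sum>\<beta><q. f \<beta> * omega q ^ (k * ((\<beta> + e) mod q)))"
    using assms by (simp add: sum_distrib_left[symmetric] sum.delta)
  also have "\<dots> = (\<Sum>\<beta><q. f \<beta> * (omega q ^ (k * e) * omega q ^ (k * \<beta>)))"
  proof (intro sum.cong refl)
    fix \<beta>
    have "omega q ^ (k * ((\<beta> + e) mod q)) = (omega q ^ ((\<beta> + e) mod q)) ^ k"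
      by (metis power_mult mult.commute)
    also have "\<dots> = (omega q ^ (\<beta> + e)) ^ k" using omega_mod[OF assms] by simp
    also have "\<dots> = omega q ^ (k * e) * omega q ^ (k * \<beta>)"
      by (simp add: power_mult[symmetric] power_add[symmetric] algebra_simps)
    finally show "f \<beta> * omega q ^ (k * ((\<beta> + e) mod q)) = f \<beta> * (omega q ^ (k * e) * omega q ^ (k * \<beta>))" by simp
  qed
  also have "\<dots> = omega q ^ (k * e) * (\<Sum>\<beta><q. omega q ^ (k * \<beta>) * f \<beta>)"
    by (simp add: sum_distrib_left mult_ac)
  finally show ?thesis .
qed



definition NL :: "(nat \<Rightarrow> complex) \<Rightarrow> nat \<Rightarrow> nat \<Rightarrow> complex poly" where
  "NL z K b = (\<Prod>i\<in>{..<K}-{b}. [:- z i, 1:])"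

definition LagP :: "(nat \<Rightarrow> complex) \<Rightarrow> nat \<Rightarrow> nat \<Rightarrow> complex poly" where
  "LagP z K b = Polynomial.smult (1 / poly (NL z K b) (z b)) (NL z K b)"

definition Vmat :: "(nat \<Rightarrow> complex) \<Rightarrow> nat \<Rightarrow> complex mat" where
  "Vmat z K = mat K K (\<lambda>(a, b). z b ^ a)"

definition Wmat :: "(nat \<Rightarrow> complex) \<Rightarrow> nat \<Rightarrow> complex mat" where
  "Wmat z K = mat K K (\<lambda>(b, a). coeff (LagP z K b) a)"

lemma poly_NL: "poly (NL z K b) x = (\<Prod>i\<in>{..<K}-{b}. x - z i)"
  unfolding NL_def by (simp add: poly_prod)

lemma degree_NL: assumes "b < K" shows "degree (NL z K b) < K"
proof -
  have "degree (NL z K b) \<le> (\<Sum>i\<in>{..<K}-{b}. degree [:- z i, 1:])"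
    unfolding NL_def using degree_prod_sum_le[of "{..<K}-{b}" "\<lambda>i. [:- z i, 1:]"] by (simp add: o_def)
  also have "\<dots> = card ({..<K}-{b})" by simp
  also have "\<dots> = K - 1" using assms by simp
  finally show ?thesis using assms by simp
qed

lemma degree_LagP: assumes "b < K" shows "degree (LagP z K b) < K"
  unfolding LagP_def using degree_NL[OF assms] degree_smult_le[of _ "NL z K b"] by (meson le_less_trans)

lemma poly_NL_nz: assumes "inj_on z {..<K}" "b < K" shows "poly (NL z K b) (z b) \<noteq> 0"
proof -
  have "z b - z i \<noteq> 0" if "i \<in> {..<K}-{b}" for i
    using that assms inj_on_eq_iff[OF assms(1), of b i] by auto
  then show ?thesis unfolding poly_NL by (simp add: prod_zero_iff)
qed

lemma poly_LagP: assumes "inj_on z {..<K}" "b < K" "b' < K"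
  shows "poly (LagP z K b) (z b') = (if b' = b then 1 else 0)"
proof (cases "b' = b")
  case True then show ?thesis using poly_NL_nz[OF assms(1,2)] by (simp add: LagP_def)
next
  case False
  then have "b' \<in> {..<K}-{b}" using assms by auto
  then have "poly (NL z K b) (z b') = 0" unfolding poly_NL
    by (intro prod_zero) auto
  then show ?thesis using False by (simp add: LagP_def)
qed

lemma poly_sum_lt: fixes p :: "complex poly" assumes "degree p < K" shows "poly p x = (\<Sum>a<K. coeff p a * x ^ a)"
proof -
  have "poly p x = (\<Sum>a\<le>degree p. coeff p a * x ^ a)" by (rule poly_altdef)
  also have "\<dots> = (\<Sum>a<K. coeff p a * x ^ a)"
    using assms by (intro sum.mono_neutral_left) (auto simp: coeff_eq_0)
  finally show ?thesis .
qed

lemma Vmat_carrier: "Vmat z K \<in> carrier_mat K K" unfolding Vmat_def by (rule mat_carrier)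
lemma Wmat_carrier: "Wmat z K \<in> carrier_mat K K" unfolding Wmat_def by (rule mat_carrier)
lemma Vmat_entry: "a < K \<Longrightarrow> b < K \<Longrightarrow> Vmat z K $$ (a, b) = z b ^ a"
  unfolding Vmat_def by (simp only: index_mat split)
lemma Wmat_entry: "b < K \<Longrightarrow> a < K \<Longrightarrow> Wmat z K $$ (b, a) = coeff (LagP z K b) a"
  unfolding Wmat_def by (simp only: index_mat split)

lemma cmult_entry: "A \<in> carrier_mat q q \<Longrightarrow> B \<in> carrier_mat q q \<Longrightarrow> i < q \<Longrightarrow> j < q \<Longrightarrow>
  (A * B) $$ (i, j) = (\<Sum>l<q. A $$ (i, l) * B $$ (l, j))"
  for A B :: "complex mat"
  by (auto simp: index_mult_mat scalar_prod_def lessThan_atLeast0 intro!: sum.cong)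

lemma WV_one: assumes "inj_on z {..<K}" shows "Wmat z K * Vmat z K = 1\<^sub>m K"
proof (rule eq_matI)
  show "dim_row (Wmat z K * Vmat z K) = dim_row (1\<^sub>m K)"
    using Wmat_carrier Vmat_carrier by (metis carrier_matD(1) index_mult_mat(2) index_one_mat(2))
  show "dim_col (Wmat z K * Vmat z K) = dim_col (1\<^sub>m K)"
    using Wmat_carrier Vmat_carrier by (metis carrier_matD(2) index_mult_mat(3) index_one_mat(3))
  fix i j assume i: "i < dim_row (1\<^sub>m K)" and j: "j < dim_col (1\<^sub>m K)"
  then have i': "i < K" and j': "j < K" by auto
  have "(Wmat z K * Vmat z K) $$ (i, j) = (\<Sum>l<K. Wmat z K $$ (i, l) * Vmat z K $$ (l, j))"
    by (rule cmult_entry[OF Wmat_carrier Vmat_carrier i' j'])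
  also have "\<dots> = (\<Sum>l<K. coeff (LagP z K i) l * z j ^ l)"
    using i' j' by (intro sum.cong refl) (simp add: Wmat_entry Vmat_entry)
  also have "\<dots> = poly (LagP z K i) (z j)"
    using poly_sum_lt[OF degree_LagP[OF i']] by simp
  also have "\<dots> = (if j = i then 1 else 0)" by (rule poly_LagP[OF assms i' j'])
  also have "\<dots> = 1\<^sub>m K $$ (i, j)" using i' j' by simp
  finally show "(Wmat z K * Vmat z K) $$ (i, j) = 1\<^sub>m K $$ (i, j)" .
qed

lemma VW_one: assumes "inj_on z {..<K}" shows "Vmat z K * Wmat z K = 1\<^sub>m K"
  by (rule mat_mult_left_right_inverse[OF Wmat_carrier Vmat_carrier WV_one[OF assms]])

lemma VW_sum: assumes "inj_on z {..<K}" "a < K" "a' < K"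
  shows "(\<Sum>b<K. z b ^ a * Wmat z K $$ (b, a')) = (if a = a' then 1 else 0)"
proof -
  have "(\<Sum>b<K. z b ^ a * Wmat z K $$ (b, a')) = (Vmat z K * Wmat z K) $$ (a, a')"
    using assms by (subst cmult_entry[OF Vmat_carrier Wmat_carrier]) (auto intro!: sum.cong simp: Vmat_entry)
  also have "\<dots> = (if a = a' then 1 else 0)" using VW_one[OF assms(1)] assms by simp
  finally show ?thesis .
qed

lemma vander_uniq: fixes u :: "nat \<Rightarrow> complex" assumes "inj_on z {..<K}" "\<forall>b<K. (\<Sum>a<K. u a * z b ^ a) = 0" "a' < K"
  shows "u a' = 0"
proof -
  have "(\<Sum>a<K. u a * (if a = a' then 1 else 0)) = (\<Sum>a<K. if a = a' then u a else 0)" by (rule sum.cong) auto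
  also have "\<dots> = u a'" using assms(3) by simp
  finally have "u a' = (\<Sum>a<K. u a * (if a = a' then 1 else 0))" by simp
  also have "\<dots> = (\<Sum>a<K. u a * (\<Sum>b<K. z b ^ a * Wmat z K $$ (b, a')))"
    using VW_sum[OF assms(1) _ assms(3)] by (intro sum.cong refl) simp
  also have "\<dots> = (\<Sum>b<K. (\<Sum>a<K. u a * z b ^ a) * Wmat z K $$ (b, a'))"
    by (simp add: sum_distrib_left sum_distrib_right mult.assoc) (rule sum.swap)
  also have "\<dots> = 0" using assms(2) by simp
  finally show ?thesis .
qed

lemma det_V: assumes "inj_on z {..<K}" shows "det (Vmat z K) \<noteq> 0"
proof -
  have "det (Wmat z K * Vmat z K) = det (Wmat z K) * det (Vmat z K)"
    by (rule det_mult[OF Wmat_carrier Vmat_carrier])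
  then have "det (Wmat z K) * det (Vmat z K) = 1" using WV_one[OF assms] by simp
  then show ?thesis by auto
qed

lemma GFd_V: "GFd q kA idx k = Vmat (\<lambda>b. omega q ^ (idx b * k)) kA"
proof (rule eq_matI)
  fix i j assume "i < dim_row (Vmat (\<lambda>b. omega q ^ (idx b * k)) kA)" "j < dim_col (Vmat (\<lambda>b. omega q ^ (idx b * k)) kA)"
  then have ij: "i < kA" "j < kA" using Vmat_carrier by (metis carrier_matD)+
  have "GFd q kA idx k $$ (i, j) = omega q ^ (i * idx j * k)"
    unfolding GFd_def using ij by (simp only: index_mat split)
  also have "\<dots> = (omega q ^ (idx j * k)) ^ i" by (simp add: power_mult[symmetric] mult_ac)
  finally show "GFd q kA idx k $$ (i, j) = Vmat (\<lambda>b. omega q ^ (idx b * k)) kA $$ (i, j)"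
    using ij by (simp add: Vmat_entry)
qed (auto simp: GFd_def Vmat_def)



lemma norm_omega [simp]: "cmod (omega q) = 1" by (simp add: omega_def)

lemma coeff_dft:
  fixes p :: "complex poly"
  assumes q: "q \<ge> 2" and dp: "degree p < q" and a: "a < q"
  shows "of_nat q * coeff p a = (\<Sum>j<q. poly p (omega q ^ j) * cnj (omega q) ^ (a * j))"
proof -
  have "(\<Sum>j<q. poly p (omega q ^ j) * cnj (omega q) ^ (a * j))
      = (\<Sum>j<q. \<Sum>l<q. coeff p l * (omega q ^ l * cnj (omega q) ^ a) ^ j)"
  proof (intro sum.cong refl)
    fix j
    have "poly p (omega q ^ j) = (\<Sum>l<q. coeff p l * (omega q ^ j) ^ l)" by (rule poly_sum_lt[OF dp])
    then show "poly p (omega q ^ j) * cnj (omega q) ^ (a * j) = (\<Sum>l<q. coeff p l * (omega q ^ l * cnj (omega q) ^ a) ^ j)"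
      by (simp add: sum_distrib_left sum_distrib_right power_mult_distrib mult_ac flip: power_mult)
  qed
  also have "\<dots> = (\<Sum>l<q. coeff p l * (\<Sum>j<q. (omega q ^ l * cnj (omega q) ^ a) ^ j))"
    by (subst sum.swap) (simp add: sum_distrib_left)
  also have "\<dots> = (\<Sum>l<q. coeff p l * (if l = a then of_nat q else 0))"
    using omega_orth[OF q _ a] by (intro sum.cong refl) simp
  also have "\<dots> = (\<Sum>l<q. if l = a then coeff p l * of_nat q else 0)"
    by (rule sum.cong) auto
  also have "\<dots> = of_nat q * coeff p a" using a by simp
  finally show ?thesis by simp
qed

lemma coeff_bound:
  fixes p :: "complex poly"
  assumes q: "q \<ge> 2" and dp: "degree p < q" and a: "a < q"
    and B: "\<And>j. j < q \<Longrightarrow> cmod (poly p (omega q ^ j)) \<le> B"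
  shows "cmod (coeff p a) \<le> B"
proof -
  have "real q * cmod (coeff p a) = cmod (of_nat q * coeff p a)" by (simp add: norm_mult)
  also have "\<dots> = cmod (\<Sum>j<q. poly p (omega q ^ j) * cnj (omega q) ^ (a * j))"
    by (simp only: coeff_dft[OF q dp a])
  also have "\<dots> \<le> (\<Sum>j<q. cmod (poly p (omega q ^ j) * cnj (omega q) ^ (a * j)))"
    by (rule norm_sum)
  also have "\<dots> = (\<Sum>j<q. cmod (poly p (omega q ^ j)))"
    by (simp add: norm_mult norm_power)
  also have "\<dots> \<le> (\<Sum>j<q. B)" by (intro sum_mono B) simp
  also have "\<dots> = real q * B" by simp
  finally show ?thesis using q by simp
qed

lemma rot_prod:
  assumes q: "q \<ge> 2" and j: "j < q"
  shows "(\<Prod>r\<in>{..<q}-{j}. cmod (omega q ^ j - omega q ^ r)) = (\<Prod>d\<in>{1..<q}. cmod (1 - omega q ^ d))"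
proof (rule prod.reindex_bij_witness[where i = "\<lambda>d. if d + j < q then d + j else d + j - q"
                                     and j = "\<lambda>r. if j \<le> r then r - j else r + q - j"])
  fix r assume r: "r \<in> {..<q}-{j}"
  show "(if (if j \<le> r then r - j else r + q - j) + j < q then (if j \<le> r then r - j else r + q - j) + j
         else (if j \<le> r then r - j else r + q - j) + j - q) = r" using r j by auto
  show "(if j \<le> r then r - j else r + q - j) \<in> {1..<q}" using r j by auto
  have "omega q ^ j * omega q ^ (if j \<le> r then r - j else r + q - j) = omega q ^ r"
  proof (cases "j \<le> r")
    case True then show ?thesis by (simp flip: power_add)
  next
    case False
    have "j + (r + q - j) = r + q" using j r by simp
    then have "omega q ^ j * omega q ^ (r + q - j) = omega q ^ r * omega q ^ q"
      by (simp flip: power_add)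
    then show ?thesis using False omega_q[of q] q by simp
  qed
  then have "omega q ^ j - omega q ^ r = omega q ^ j * (1 - omega q ^ (if j \<le> r then r - j else r + q - j))"
    by (simp add: algebra_simps)
  then show "cmod (1 - omega q ^ (if j \<le> r then r - j else r + q - j)) = cmod (omega q ^ j - omega q ^ r)"
    by (simp add: norm_mult)
next
  fix d assume d: "d \<in> {1..<q}"
  show "(if j \<le> (if d + j < q then d + j else d + j - q) then (if d + j < q then d + j else d + j - q) - j
         else (if d + j < q then d + j else d + j - q) + q - j) = d" using d j by auto
  show "(if d + j < q then d + j else d + j - q) \<in> {..<q} - {j}" using d j by auto
qed

lemma NL_ratio:
  assumes q: "q \<ge> 2" and K: "K \<le> q" and e: "inj_on e {..<K}" "\<forall>b<K. e b < q"
    and b: "b < K" and j: "j < q"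
  shows "cmod (poly (NL (\<lambda>i. omega q ^ e i) K b) (omega q ^ j))
         \<le> real q ^ (q - K) * cmod (poly (NL (\<lambda>i. omega q ^ e i) K b) (omega q ^ e b))"
proof -
  define I where "I = {..<K} - {b}"
  define E where "E = e ` I"
  define Af where "Af = (\<lambda>x. (\<Prod>i\<in>I. cmod (x - omega q ^ e i)))"
  have Aeq: "cmod (poly (NL (\<lambda>i. omega q ^ e i) K b) x) = Af x" for x
    unfolding poly_NL Af_def I_def by (simp add: prod_norm)
  have injI: "inj_on e I" using e(1) by (rule inj_on_subset) (auto simp: I_def)
  have EI: "E \<subseteq> {..<q}" using e(2) by (auto simp: E_def I_def)
  have "card E = card I" unfolding E_def by (rule card_image[OF injI])
  then have cardE: "card E = K - 1" using b by (simp add: I_def)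
  define U where "U = (\<lambda>j'. {..<q} - E - {j'})"
  define P0 where "P0 = (\<Prod>d\<in>{1..<q}. cmod (1 - omega q ^ d))"
  have split: "P0 = Af (omega q ^ j') * (\<Prod>r\<in>U j'. cmod (omega q ^ j' - omega q ^ r))"
    if j': "j' < q" "j' \<notin> E" for j'
  proof -
    have "{..<q} - {j'} = E \<union> U j'" using EI j' by (auto simp: U_def)
    then have "P0 = (\<Prod>r\<in>E \<union> U j'. cmod (omega q ^ j' - omega q ^ r))"
      using rot_prod[OF q j'(1)] by (simp add: P0_def)
    also have "\<dots> = (\<Prod>r\<in>E. cmod (omega q ^ j' - omega q ^ r)) * (\<Prod>r\<in>U j'. cmod (omega q ^ j' - omega q ^ r))"
      by (rule prod.union_disjoint) (auto simp: U_def E_def I_def)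
    also have "(\<Prod>r\<in>E. cmod (omega q ^ j' - omega q ^ r)) = Af (omega q ^ j')"
      unfolding E_def Af_def by (simp add: prod.reindex[OF injI])
    finally show ?thesis .
  qed
  have cardU: "card (U j') = q - K" if j': "j' < q" "j' \<notin> E" for j'
  proof -
    have "card ({..<q} - E) = q - (K - 1)" using EI cardE by (simp add: card_Diff_subset finite_subset)
    moreover have "j' \<in> {..<q} - E" using j' by simp
    ultimately have "card ({..<q} - E - {j'}) = q - (K - 1) - 1" by (simp add: card_Diff_singleton)
    then show ?thesis using b K by (simp add: U_def)
  qed
  have finU: "finite (U j')" for j' by (simp add: U_def)
  show ?thesis
  proof (cases "j \<in> E")
    case True
    then obtain i where i: "i \<in> I" "j = e i" by (auto simp: E_def)
    have "Af (omega q ^ j) = 0" unfolding Af_def using i by (intro prod_zero) (auto simp: I_def)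
    moreover have "Af (omega q ^ e b) \<ge> 0" unfolding Af_def by (auto intro: prod_nonneg)
    ultimately show ?thesis by (simp add: Aeq)
  next
    case False
    have ebE: "e b \<notin> E"
    proof
      assume "e b \<in> E"
      then obtain i where "i \<in> I" "e b = e i" by (auto simp: E_def)
      then show False using inj_on_eq_iff[OF e(1), of b i] b by (auto simp: I_def)
    qed
    have eb: "e b < q" using e(2) b by simp
    have low: "(2 / real q) ^ (q - K) \<le> (\<Prod>r\<in>U j. cmod (omega q ^ j - omega q ^ r))"
    proof -
      have "(\<Prod>r\<in>U j. 2 / real q) \<le> (\<Prod>r\<in>U j. cmod (omega q ^ j - omega q ^ r))"
        by (intro prod_mono) (auto simp: U_def intro!: omega_dist[OF q] j)
      then show ?thesis using cardU[OF j False] by simp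
    qed
    have up: "(\<Prod>r\<in>U (e b). cmod (omega q ^ e b - omega q ^ r)) \<le> 2 ^ (q - K)"
    proof -
      have "(\<Prod>r\<in>U (e b). cmod (omega q ^ e b - omega q ^ r)) \<le> (\<Prod>r\<in>U (e b). 2)"
      proof (intro prod_mono conjI norm_ge_zero)
        fix r
        have "cmod (omega q ^ e b - omega q ^ r) \<le> cmod (omega q ^ e b) + cmod (omega q ^ r)"
          by (rule norm_triangle_ineq4)
        then show "cmod (omega q ^ e b - omega q ^ r) \<le> 2" by simp
      qed
      then show ?thesis using cardU[OF eb ebE] by simp
    qed
    have A0: "Af (omega q ^ j) \<ge> 0" "Af (omega q ^ e b) \<ge> 0" unfolding Af_def by (auto intro: prod_nonneg)
    have "Af (omega q ^ j) * (2 / real q) ^ (q - K) \<le> Af (omega q ^ j) * (\<Prod>r\<in>U j. cmod (omega q ^ j - omega q ^ r))"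
      using low A0 by (intro mult_left_mono) auto
    also have "\<dots> = Af (omega q ^ e b) * (\<Prod>r\<in>U (e b). cmod (omega q ^ e b - omega q ^ r))"
      using split[OF j False] split[OF eb ebE] by simp
    also have "\<dots> \<le> Af (omega q ^ e b) * 2 ^ (q - K)"
      using up A0 by (intro mult_left_mono) auto
    finally have "Af (omega q ^ j) * 2 ^ (q - K) / real q ^ (q - K) \<le> Af (omega q ^ e b) * 2 ^ (q - K)"
      by (simp add: power_divide)
    then have "Af (omega q ^ j) \<le> Af (omega q ^ e b) * real q ^ (q - K)"
      using q by (simp add: field_simps)
    then show ?thesis by (simp add: Aeq mult.commute)
  qed
qed

lemma LagP_bound:
  assumes q: "q \<ge> 2" and K: "K \<le> q" and e: "inj_on e {..<K}" "\<forall>b<K. e b < q"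
    and b: "b < K" and a: "a < K"
  shows "cmod (coeff (LagP (\<lambda>i. omega q ^ e i) K b) a) \<le> real q ^ (q - K)"
proof -
  let ?z = "\<lambda>i. omega q ^ e i"
  have injz: "inj_on ?z {..<K}"
  proof (rule inj_onI)
    fix x y assume "x \<in> {..<K}" "y \<in> {..<K}" "?z x = ?z y"
    then have "e x = e y" using omega_inj[OF q] e(2) by auto
    then show "x = y" using e(1) \<open>x \<in> {..<K}\<close> \<open>y \<in> {..<K}\<close> by (auto dest: inj_onD)
  qed
  have nz: "poly (NL ?z K b) (?z b) \<noteq> 0" by (rule poly_NL_nz[OF injz b])
  show ?thesis
  proof (rule coeff_bound[OF q])
    show "degree (LagP ?z K b) < q" using degree_LagP[OF b, of ?z] K by (meson less_le_trans)
    show "a < q" using a K by simp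
    fix j assume j: "j < q"
    have "cmod (poly (LagP ?z K b) (omega q ^ j)) = cmod (poly (NL ?z K b) (omega q ^ j)) / cmod (poly (NL ?z K b) (?z b))"
      by (simp add: LagP_def norm_divide)
    also have "\<dots> \<le> real q ^ (q - K)"
      using NL_ratio[OF q K e b j] nz by (simp add: divide_le_eq)
    finally show "cmod (poly (LagP ?z K b) (omega q ^ j)) \<le> real q ^ (q - K)" .
  qed
qed



lemma spec_norm_bound:
  assumes M: "M \<in> carrier_mat K K" and K: "K \<ge> 1"
    and B: "\<And>i j. i < K \<Longrightarrow> j < K \<Longrightarrow> cmod (M $$ (i, j)) \<le> B"
  shows "0 \<le> spec_norm M \<and> spec_norm M \<le> B * real K * sqrt (real K)"
proof -
  have dimM: "dim_row M = K" "dim_col M = K" using M by auto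
  have "cmod (M $$ (0, 0)) \<le> B" using B[of 0 0] K by simp
  then have B0: "0 \<le> B" using norm_ge_zero order_trans by blast
  define S where "S = {vnorm2 (M *\<^sub>v v) | v. v \<in> carrier_vec (dim_col M) \<and> vnorm2 v = 1}"
  have elem: "vnorm2 (M *\<^sub>v v) \<le> B * real K * sqrt (real K)"
    if v: "v \<in> carrier_vec K" "vnorm2 v = 1" for v
  proof -
    have dv: "dim_vec v = K" using v by auto
    have s1: "(\<Sum>i<K. (cmod (v $ i))\<^sup>2) = 1" using v(2) dv by (simp add: vnorm2_def)
    have vj: "cmod (v $ j) \<le> 1" if j: "j < K" for j
    proof -
      have "(cmod (v $ j))\<^sup>2 \<le> (\<Sum>i<K. (cmod (v $ i))\<^sup>2)"
        using j by (intro member_le_sum) auto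
      then have "(cmod (v $ j))\<^sup>2 \<le> 1\<^sup>2" using s1 by simp
      then show ?thesis by (rule power2_le_imp_le) simp
    qed
    have ent: "cmod ((M *\<^sub>v v) $ i) \<le> real K * B" if i: "i < K" for i
    proof -
      have "(M *\<^sub>v v) $ i = (\<Sum>j<K. M $$ (i, j) * v $ j)"
        using i dimM dv by (auto simp: index_mult_mat_vec scalar_prod_def lessThan_atLeast0 intro!: sum.cong)
      then have "cmod ((M *\<^sub>v v) $ i) \<le> (\<Sum>j<K. cmod (M $$ (i, j) * v $ j))"
        by (simp add: norm_sum)
      also have "\<dots> \<le> (\<Sum>j<K. B)"
      proof (intro sum_mono)
        fix j assume "j \<in> {..<K}"
        then have "cmod (M $$ (i, j)) \<le> B" "cmod (v $ j) \<le> 1" using B i vj by auto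
        then show "cmod (M $$ (i, j) * v $ j) \<le> B" unfolding norm_mult
          using B0 by (metis mult_mono mult.right_neutral norm_ge_zero)
      qed
      finally show ?thesis by simp
    qed
    have dMv: "dim_vec (M *\<^sub>v v) = K" using dimM by simp
    have "(\<Sum>i<K. (cmod ((M *\<^sub>v v) $ i))\<^sup>2) \<le> (\<Sum>i<K. (real K * B)\<^sup>2)"
      using ent by (intro sum_mono power_mono) auto
    also have "\<dots> = real K * (real K * B)\<^sup>2" by simp
    finally have "vnorm2 (M *\<^sub>v v) \<le> sqrt (real K * (real K * B)\<^sup>2)"
      unfolding vnorm2_def dMv by simp
    also have "\<dots> = real K * B * sqrt (real K)"
      using B0 by (simp add: real_sqrt_mult)
    finally show ?thesis by (simp add: mult_ac)
  qed
  have u: "unit_vec K 0 \<in> carrier_vec K" by simp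
  have "(\<Sum>i<K. (cmod (unit_vec K 0 $ i))\<^sup>2) = (\<Sum>i<K. if i = 0 then 1 else 0)"
    by (intro sum.cong refl) simp
  also have "\<dots> = 1" using K by simp
  finally have u1: "vnorm2 (unit_vec K 0) = 1" by (simp add: vnorm2_def)
  have inS: "vnorm2 (M *\<^sub>v unit_vec K 0) \<in> S" unfolding S_def using u u1 dimM by auto
  have ne: "S \<noteq> {}" using inS by auto
  have ub: "\<forall>x\<in>S. x \<le> B * real K * sqrt (real K)" unfolding S_def using elem dimM by auto
  have "spec_norm M \<le> B * real K * sqrt (real K)"
    unfolding spec_norm_def S_def[symmetric] by (rule cSup_least[OF ne]) (use ub in auto)
  moreover have "0 \<le> spec_norm M"
  proof -
    have bdd: "bdd_above S" using ub by (auto simp: bdd_above_def)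
    have "0 \<le> vnorm2 (M *\<^sub>v unit_vec K 0)" unfolding vnorm2_def by (intro real_sqrt_ge_zero sum_nonneg) simp
    also have "\<dots> \<le> Sup S" by (rule cSup_upper[OF inS bdd])
    finally show ?thesis unfolding spec_norm_def S_def .
  qed
  ultimately show ?thesis by simp
qed

lemma mat_inv_W: assumes "inj_on z {..<K}" shows "mat_inv (Vmat z K) = Wmat z K"
proof -
  have dV: "dim_row (Vmat z K) = K" using Vmat_carrier by (metis carrier_matD(1))
  have dW: "dim_row (Wmat z K) = K" using Wmat_carrier by (metis carrier_matD(1))
  show ?thesis unfolding mat_inv_def
  proof (rule the_equality)
    show "Wmat z K \<in> carrier_mat (dim_row (Vmat z K)) (dim_row (Vmat z K)) \<and> inverts_mat (Vmat z K) (Wmat z K) \<and> inverts_mat (Wmat z K) (Vmat z K)"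
      using Wmat_carrier VW_one[OF assms] WV_one[OF assms] dV dW by (simp add: inverts_mat_def)
  next
    fix B assume "B \<in> carrier_mat (dim_row (Vmat z K)) (dim_row (Vmat z K)) \<and> inverts_mat (Vmat z K) B \<and> inverts_mat B (Vmat z K)"
    then have B: "B \<in> carrier_mat K K" "B * Vmat z K = 1\<^sub>m K" using dV by (auto simp: inverts_mat_def)
    have "B = B * 1\<^sub>m K" using B(1) by simp
    also have "\<dots> = B * (Vmat z K * Wmat z K)" using VW_one[OF assms] by simp
    also have "\<dots> = (B * Vmat z K) * Wmat z K"
      using B(1) Vmat_carrier Wmat_carrier by (metis assoc_mult_mat)
    also have "\<dots> = Wmat z K" using B(2) left_mult_one_mat[OF Wmat_carrier] by simp
    finally show "B = Wmat z K" .
  qed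
qed



lemma setup_e:
  assumes q: "prime q" and kq: "kA \<le> q" and inj: "inj_on idx {..<kA}" and idx: "\<forall>b<kA. idx b < q"
    and k: "1 \<le> k" "k < q"
  shows "inj_on (\<lambda>b. (idx b * k) mod q) {..<kA}" "\<forall>b<kA. (idx b * k) mod q < q"
    "GFd q kA idx k = Vmat (\<lambda>b. omega q ^ ((idx b * k) mod q)) kA"
    "inj_on (\<lambda>b. omega q ^ (idx b * k)) {..<kA}"
proof -
  have q2: "q \<ge> 2" using q by (simp add: prime_ge_2_nat)
  have cop: "coprime q k"
  proof (rule prime_imp_coprime[OF q])
    show "\<not> q dvd k" using k by (auto dest: dvd_imp_le)
  qed
  show inje: "inj_on (\<lambda>b. (idx b * k) mod q) {..<kA}"
  proof (rule inj_onI)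
    fix x y assume xy: "x \<in> {..<kA}" "y \<in> {..<kA}" "(idx x * k) mod q = (idx y * k) mod q"
    then have "int ((idx x * k) mod q) = int ((idx y * k) mod q)" by simp
    then have "(int (idx x) * int k) mod int q = (int (idx y) * int k) mod int q"
      by (simp only: zmod_int of_nat_mult)
    moreover have "coprime (int q) (int k)" using cop by simp
    ultimately have "int (idx x) mod int q = int (idx y) mod int q" by (rule mult_mod_cancel_right)
    then have "int (idx x mod q) = int (idx y mod q)" by (simp only: zmod_int)
    then have "idx x mod q = idx y mod q" by simp
    then have "idx x = idx y" using idx xy by simp
    then show "x = y" using inj xy by (auto dest: inj_onD)
  qed
  show lt: "\<forall>b<kA. (idx b * k) mod q < q" using q2 by simp
  have fe: "(\<lambda>b. omega q ^ (idx b * k)) = (\<lambda>b. omega q ^ ((idx b * k) mod q))"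
    using omega_mod[of q] q2 by auto
  show "GFd q kA idx k = Vmat (\<lambda>b. omega q ^ ((idx b * k) mod q)) kA"
    using GFd_V fe by metis
  show "inj_on (\<lambda>b. omega q ^ (idx b * k)) {..<kA}"
  proof (rule inj_onI)
    fix x y assume xy: "x \<in> {..<kA}" "y \<in> {..<kA}" "omega q ^ (idx x * k) = omega q ^ (idx y * k)"
    then have "omega q ^ ((idx x * k) mod q) = omega q ^ ((idx y * k) mod q)" using fe by metis
    then have "(idx x * k) mod q = (idx y * k) mod q" using omega_inj[OF q2] q2 by simp
    then show "x = y" using inje xy by (auto dest: inj_onD)
  qed
qed

lemma part2:
  assumes q: "prime q" and nq: "n \<le> q" and kA: "1 \<le> kA" "kA \<le> n" and inj: "inj_on idx {..<kA}"
    and idx: "\<forall>b<kA. idx b < n" and k: "1 \<le> k" "k < q"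
  shows "det (GFd q kA idx k) \<noteq> 0 \<and> cond_num (GFd q kA idx k) \<le> 1 * real q powr (real q - real kA + 5.5)"
proof -
  have q2: "q \<ge> 2" using q by (simp add: prime_ge_2_nat)
  have kq: "kA \<le> q" using kA nq by simp
  have idxq: "\<forall>b<kA. idx b < q" using idx nq by auto
  note S = setup_e[OF q kq inj idxq k]
  define e where "e = (\<lambda>b. (idx b * k) mod q)"
  define z where "z = (\<lambda>b. omega q ^ e b)"
  have G: "GFd q kA idx k = Vmat z kA" using S(3) by (simp add: z_def e_def)
  have injz: "inj_on z {..<kA}"
  proof (rule inj_onI)
    fix x y assume xy: "x \<in> {..<kA}" "y \<in> {..<kA}" "z x = z y"
    then have "e x = e y" using omega_inj[OF q2] S(2) by (auto simp: z_def e_def)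
    then show "x = y" using S(1) xy by (auto dest: inj_onD simp: e_def)
  qed
  have det: "det (GFd q kA idx k) \<noteq> 0" using det_V[OF injz] G by simp
  have sV: "0 \<le> spec_norm (Vmat z kA) \<and> spec_norm (Vmat z kA) \<le> 1 * real kA * sqrt (real kA)"
    by (rule spec_norm_bound[OF Vmat_carrier kA(1)]) (simp add: Vmat_entry z_def norm_power)
  have sW: "0 \<le> spec_norm (Wmat z kA) \<and> spec_norm (Wmat z kA) \<le> real q ^ (q - kA) * real kA * sqrt (real kA)"
  proof (rule spec_norm_bound[OF Wmat_carrier kA(1)])
    fix i j assume ij: "i < kA" "j < kA"
    show "cmod (Wmat z kA $$ (i, j)) \<le> real q ^ (q - kA)"
      using LagP_bound[OF q2 kq S(1) S(2) ij] ij by (simp add: Wmat_entry z_def e_def)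
  qed
  have "cond_num (GFd q kA idx k) = spec_norm (Vmat z kA) * spec_norm (Wmat z kA)"
    unfolding cond_num_def G mat_inv_W[OF injz] ..
  also have "\<dots> \<le> (1 * real kA * sqrt (real kA)) * (real q ^ (q - kA) * real kA * sqrt (real kA))"
    using sV sW by (intro mult_mono) auto
  also have "\<dots> = real q ^ (q - kA) * real kA ^ 3"
    by (simp add: power3_eq_cube mult_ac)
  also have "\<dots> \<le> real q ^ (q - kA) * real q ^ 3"
    using kq by (intro mult_left_mono power_mono) auto
  also have "\<dots> = real q ^ (q - kA + 3)" by (simp add: power_add)
  also have "\<dots> = real q powr (real (q - kA + 3))"
    using q2 powr_realpow[of "real q" "q - kA + 3"] by simp
  also have "\<dots> \<le> real q powr (real q - real kA + 5.5)"
    using q2 kq by (intro powr_mono) (auto simp: of_nat_diff)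
  finally show ?thesis using det by simp
qed



lemma Ablk_sum0: assumes "q \<ge> 1" shows "(\<Sum>\<beta><q. Ablk q w A \<alpha> \<beta> s p) = 0"
proof -
  have qq: "q = Suc (q - 1)" using assms by simp
  have "(\<Sum>\<beta><q. Ablk q w A \<alpha> \<beta> s p) = (\<Sum>\<beta><Suc (q - 1). Ablk q w A \<alpha> \<beta> s p)" using qq by metis
  also have "\<dots> = (\<Sum>\<beta><q - 1. Ablk q w A \<alpha> \<beta> s p) + Ablk q w A \<alpha> (q - 1) s p" by (rule sum.lessThan_Suc)
  also have "(\<Sum>\<beta><q - 1. Ablk q w A \<alpha> \<beta> s p) = (\<Sum>\<beta><q - 1. A s ((\<alpha> * (q - 1) + \<beta>) * w + p))"
    by (intro sum.cong refl) (simp add: Ablk_def)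
  also have "Ablk q w A \<alpha> (q - 1) s p = - (\<Sum>\<beta>'<q - 1. A s ((\<alpha> * (q - 1) + \<beta>') * w + p))"
    by (simp add: Ablk_def)
  finally show ?thesis by simp
qed

lemma m_sum0: assumes "q \<ge> 1" shows "(\<Sum>\<beta><q. matT_x t (Ablk q w A \<alpha> \<beta>) x p) = 0"
proof -
  have "(\<Sum>\<beta><q. matT_x t (Ablk q w A \<alpha> \<beta>) x p) = (\<Sum>s<t. (\<Sum>\<beta><q. Ablk q w A \<alpha> \<beta> s p) * x s)"
    unfolding matT_x_def sum_distrib_right by (rule sum.swap)
  also have "\<dots> = 0" using Ablk_sum0[OF assms] by simp
  finally show ?thesis .
qed

lemma key_id:
  assumes q: "q \<ge> 2" and i: "i < n"
  shows "(\<Sum>j<q. omega q ^ (k * j) * complex_of_real (\<Sum>\<alpha><kA. \<Sum>\<beta><q. f \<alpha> \<beta> * Gcirc kA n q $$ (\<alpha> * q + \<beta>, i * q + j)))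
       = (\<Sum>\<alpha><kA. (\<Sum>\<beta><q. omega q ^ (k * \<beta>) * complex_of_real (f \<alpha> \<beta>)) * (omega q ^ (i * k)) ^ \<alpha>)"
proof -
  have q0: "q > 0" using q by simp
  have "(\<Sum>j<q. omega q ^ (k * j) * complex_of_real (\<Sum>\<alpha><kA. \<Sum>\<beta><q. f \<alpha> \<beta> * Gcirc kA n q $$ (\<alpha> * q + \<beta>, i * q + j)))
      = (\<Sum>j<q. \<Sum>\<alpha><kA. omega q ^ (k * j) * (\<Sum>\<beta><q. complex_of_real (f \<alpha> \<beta>) * (if j = (\<beta> + i * \<alpha>) mod q then 1 else 0)))"
  proof (intro sum.cong refl)
    fix j assume j: "j \<in> {..<q}"
    have "complex_of_real (\<Sum>\<alpha><kA. \<Sum>\<beta><q. f \<alpha> \<beta> * Gcirc kA n q $$ (\<alpha> * q + \<beta>, i * q + j))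
        = (\<Sum>\<alpha><kA. \<Sum>\<beta><q. complex_of_real (f \<alpha> \<beta>) * (if j = (\<beta> + i * \<alpha>) mod q then 1 else 0))"
      unfolding of_real_sum
      by (intro sum.cong refl) (use j q0 i in \<open>simp add: Gcirc_entry\<close>)
    then show "omega q ^ (k * j) * complex_of_real (\<Sum>\<alpha><kA. \<Sum>\<beta><q. f \<alpha> \<beta> * Gcirc kA n q $$ (\<alpha> * q + \<beta>, i * q + j))
       = (\<Sum>\<alpha><kA. omega q ^ (k * j) * (\<Sum>\<beta><q. complex_of_real (f \<alpha> \<beta>) * (if j = (\<beta> + i * \<alpha>) mod q then 1 else 0)))"
      by (simp add: sum_distrib_left)
  qed
  also have "\<dots> = (\<Sum>\<alpha><kA. \<Sum>j<q. omega q ^ (k * j) * (\<Sum>\<beta><q. complex_of_real (f \<alpha> \<beta>) * (if j = (\<beta> + i * \<alpha>) mod q then 1 else 0)))"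
    by (rule sum.swap)
  also have "\<dots> = (\<Sum>\<alpha><kA. omega q ^ (k * (i * \<alpha>)) * (\<Sum>\<beta><q. omega q ^ (k * \<beta>) * complex_of_real (f \<alpha> \<beta>)))"
    by (intro sum.cong refl dft_shift q0)
  also have "\<dots> = (\<Sum>\<alpha><kA. (\<Sum>\<beta><q. omega q ^ (k * \<beta>) * complex_of_real (f \<alpha> \<beta>)) * (omega q ^ (i * k)) ^ \<alpha>)"
    by (intro sum.cong refl) (simp add: mult_ac flip: power_mult)
  finally show ?thesis .
qed

lemma idft_inv:
  fixes g :: "nat \<Rightarrow> complex"
  assumes q: "q \<ge> 2" and b: "\<beta> < q"
  shows "(\<Sum>k<q. cnj (omega q) ^ (\<beta> * k) * (\<Sum>l<q. omega q ^ (k * l) * g l)) = of_nat q * g \<beta>"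
proof -
  have "(\<Sum>k<q. cnj (omega q) ^ (\<beta> * k) * (\<Sum>l<q. omega q ^ (k * l) * g l))
      = (\<Sum>k<q. \<Sum>l<q. g l * (omega q ^ l * cnj (omega q) ^ \<beta>) ^ k)"
    by (intro sum.cong refl) (simp add: sum_distrib_left power_mult_distrib mult_ac flip: power_mult)
  also have "\<dots> = (\<Sum>l<q. g l * (\<Sum>k<q. (omega q ^ l * cnj (omega q) ^ \<beta>) ^ k))"
    by (subst sum.swap) (simp add: sum_distrib_left)
  also have "\<dots> = (\<Sum>l<q. g l * (if l = \<beta> then of_nat q else 0))"
    using omega_orth[OF q _ b] by (intro sum.cong refl) simp
  also have "\<dots> = (\<Sum>l<q. if l = \<beta> then g l * of_nat q else 0)"
    by (rule sum.cong) auto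
  also have "\<dots> = of_nat q * g \<beta>" using b by simp
  finally show ?thesis .
qed

lemma GFd_entry: "a < kA \<Longrightarrow> b < kA \<Longrightarrow> GFd q kA idx k $$ (a, b) = (omega q ^ (idx b * k)) ^ a"
  by (simp add: GFd_V Vmat_entry)

lemma THE_sol:
  fixes r :: "nat \<Rightarrow> complex"
  assumes inj: "inj_on z {..<K}" and GF: "\<And>a b. a < K \<Longrightarrow> b < K \<Longrightarrow> GF $$ (a, b) = z b ^ a"
    and sol: "\<And>b. b < K \<Longrightarrow> (\<Sum>a<K. r a * z b ^ a) = h b"
  shows "(THE y. y \<in> carrier_vec K \<and> (\<forall>b<K. (\<Sum>a<K. y $ a * GF $$ (a, b)) = h b)) = vec K r"
proof (rule the_equality)
  show "vec K r \<in> carrier_vec K \<and> (\<forall>b<K. (\<Sum>a<K. vec K r $ a * GF $$ (a, b)) = h b)"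
  proof (intro conjI allI impI)
    fix b assume b: "b < K"
    have "(\<Sum>a<K. vec K r $ a * GF $$ (a, b)) = (\<Sum>a<K. r a * z b ^ a)"
      using b by (intro sum.cong refl) (simp add: GF)
    then show "(\<Sum>a<K. vec K r $ a * GF $$ (a, b)) = h b" using sol b by simp
  qed simp
next
  fix y assume y: "y \<in> carrier_vec K \<and> (\<forall>b<K. (\<Sum>a<K. y $ a * GF $$ (a, b)) = h b)"
  have u: "\<forall>b<K. (\<Sum>a<K. (y $ a - r a) * z b ^ a) = 0"
  proof (intro allI impI)
    fix b assume b: "b < K"
    have "(\<Sum>a<K. (y $ a - r a) * z b ^ a) = (\<Sum>a<K. y $ a * GF $$ (a, b)) - (\<Sum>a<K. r a * z b ^ a)"
      using b by (simp add: left_diff_distrib sum_subtractf GF)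
    then show "(\<Sum>a<K. (y $ a - r a) * z b ^ a) = 0" using y sol b by simp
  qed
  show "y = vec K r"
  proof (rule eq_vecI)
    fix a assume "a < dim_vec (vec K r)"
    then have a: "a < K" by simp
    have "y $ a - r a = 0" by (rule vander_uniq[OF inj u a])
    then show "y $ a = vec K r $ a" using a by simp
  qed (use y in auto)
qed



definition Fd :: "nat \<Rightarrow> (nat \<Rightarrow> nat \<Rightarrow> real) \<Rightarrow> nat \<Rightarrow> nat \<Rightarrow> complex" where
  "Fd q f \<alpha> k = (\<Sum>\<beta><q. omega q ^ (k * \<beta>) * complex_of_real (f \<alpha> \<beta>))"

lemma Fd_inv: assumes "q \<ge> 2" "\<beta> < q"
  shows "(\<Sum>k<q. cnj (omega q) ^ (\<beta> * k) * Fd q f \<alpha> k) = of_nat q * complex_of_real (f \<alpha> \<beta>)"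
  unfolding Fd_def by (rule idft_inv[OF assms, of "\<lambda>l. complex_of_real (f \<alpha> l)"])

lemma Fd0: "(\<Sum>\<beta><q. f \<alpha> \<beta>) = 0 \<Longrightarrow> Fd q f \<alpha> 0 = 0"
  unfolding Fd_def by (simp flip: of_real_sum)

lemma part1:
  assumes q: "prime q" and nq: "n \<le> q" and kA: "1 \<le> kA" "kA \<le> n" and inj: "inj_on idx {..<kA}"
    and idx: "\<forall>b<kA. idx b < n"
    and m_def: "m = (\<lambda>\<alpha> \<beta>. matT_x t (Ablk q w A \<alpha> \<beta>) x p)"
    and c_def: "c = (\<lambda>b j. matT_x t (Ahat kA n q w A (idx b) j) x p)"
  shows "(\<forall>b<kA. \<forall>j<q. c b j =
                    (\<Sum>\<alpha><kA. \<Sum>\<beta><q. m \<alpha> \<beta> * Gcirc kA n q $$ (\<alpha> * q + \<beta>, idx b * q + j)))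
       \<and> (\<forall>m'. (\<forall>\<alpha><kA. (\<Sum>\<beta><q. m' \<alpha> \<beta>) = 0) \<and>
                      (\<forall>b<kA. \<forall>j<q. c b j =
                         (\<Sum>\<alpha><kA. \<Sum>\<beta><q. m' \<alpha> \<beta> * Gcirc kA n q $$ (\<alpha> * q + \<beta>, idx b * q + j)))
                      \<longrightarrow> (\<forall>\<alpha><kA. \<forall>\<beta><q. m' \<alpha> \<beta> = m \<alpha> \<beta>))
       \<and> (\<forall>\<alpha><kA. \<forall>\<beta><q. decode q kA idx c \<alpha> \<beta> = complex_of_real (m \<alpha> \<beta>))"
proof -
  have q2: "q \<ge> 2" using q by (simp add: prime_ge_2_nat)
  have kq: "kA \<le> q" using kA nq by simp
  have idxq: "\<forall>b<kA. idx b < q" using idx nq by auto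
  let ?G = "\<lambda>b j \<alpha> \<beta>. Gcirc kA n q $$ (\<alpha> * q + \<beta>, idx b * q + j)"
  have PA: "\<forall>b<kA. \<forall>j<q. c b j = (\<Sum>\<alpha><kA. \<Sum>\<beta><q. m \<alpha> \<beta> * ?G b j \<alpha> \<beta>)"
    unfolding c_def m_def by (simp add: partA)
  have msum: "\<forall>\<alpha>. (\<Sum>\<beta><q. m \<alpha> \<beta>) = 0" unfolding m_def using m_sum0 q2 by simp
  have injk: "inj_on (\<lambda>b. omega q ^ (idx b * k)) {..<kA}" if k: "1 \<le> k" "k < q" for k
    using setup_e(4)[OF q kq inj idxq k] .
  have KEY: "(\<Sum>j<q. omega q ^ (k * j) * complex_of_real (\<Sum>\<alpha><kA. \<Sum>\<beta><q. f \<alpha> \<beta> * ?G b j \<alpha> \<beta>))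
       = (\<Sum>\<alpha><kA. Fd q f \<alpha> k * (omega q ^ (idx b * k)) ^ \<alpha>)" if b: "b < kA" for f b k
  proof -
    have ib: "idx b < n" using idx b by simp
    show ?thesis unfolding Fd_def by (rule key_id[OF q2 ib])
  qed
  have PB: "\<forall>m'. (\<forall>\<alpha><kA. (\<Sum>\<beta><q. m' \<alpha> \<beta>) = 0) \<and>
                 (\<forall>b<kA. \<forall>j<q. c b j = (\<Sum>\<alpha><kA. \<Sum>\<beta><q. m' \<alpha> \<beta> * ?G b j \<alpha> \<beta>))
              \<longrightarrow> (\<forall>\<alpha><kA. \<forall>\<beta><q. m' \<alpha> \<beta> = m \<alpha> \<beta>)"
  proof (intro allI impI)
    fix m' \<alpha> \<beta>
    assume H: "(\<forall>\<alpha><kA. (\<Sum>\<beta><q. m' \<alpha> \<beta>) = 0) \<and> (\<forall>b<kA. \<forall>j<q. c b j = (\<Sum>\<alpha><kA. \<Sum>\<beta><q. m' \<alpha> \<beta> * ?G b j \<alpha> \<beta>))"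
      and a: "\<alpha> < kA" and b: "\<beta> < q"
    define d where "d = (\<lambda>\<alpha> \<beta>. m' \<alpha> \<beta> - m \<alpha> \<beta>)"
    have hd: "(\<Sum>\<alpha><kA. \<Sum>\<beta><q. d \<alpha> \<beta> * ?G b j \<alpha> \<beta>) = 0" if "b < kA" "j < q" for b j
    proof -
      have "(\<Sum>\<alpha><kA. \<Sum>\<beta><q. d \<alpha> \<beta> * ?G b j \<alpha> \<beta>)
          = (\<Sum>\<alpha><kA. \<Sum>\<beta><q. m' \<alpha> \<beta> * ?G b j \<alpha> \<beta>) - (\<Sum>\<alpha><kA. \<Sum>\<beta><q. m \<alpha> \<beta> * ?G b j \<alpha> \<beta>)"
        by (simp add: d_def left_diff_distrib sum_subtractf)
      then show ?thesis using H PA that by simp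
    qed
    have dsum: "(\<Sum>\<beta><q. d \<alpha>' \<beta>) = 0" if "\<alpha>' < kA" for \<alpha>'
      using H msum that by (simp add: d_def sum_subtractf)
    have Fz: "Fd q d \<alpha> k = 0" if k: "k < q" for k
    proof (cases "k = 0")
      case True then show ?thesis using Fd0[of d \<alpha> q, OF dsum[OF a]] by simp
    next
      case False
      then have k1: "1 \<le> k" by simp
      have "\<forall>b<kA. (\<Sum>\<alpha><kA. Fd q d \<alpha> k * (omega q ^ (idx b * k)) ^ \<alpha>) = 0"
      proof (intro allI impI)
        fix b assume bk: "b < kA"
        have "(\<Sum>\<alpha><kA. Fd q d \<alpha> k * (omega q ^ (idx b * k)) ^ \<alpha>)
            = (\<Sum>j<q. omega q ^ (k * j) * complex_of_real (\<Sum>\<alpha><kA. \<Sum>\<beta><q. d \<alpha> \<beta> * ?G b j \<alpha> \<beta>))"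
          using KEY[OF bk] by simp
        also have "\<dots> = 0" using hd[OF bk] by simp
        finally show "(\<Sum>\<alpha><kA. Fd q d \<alpha> k * (omega q ^ (idx b * k)) ^ \<alpha>) = 0" .
      qed
      then show ?thesis using vander_uniq[OF injk[OF k1 k], of "\<lambda>\<alpha>. Fd q d \<alpha> k"] a by blast
    qed
    have "of_nat q * complex_of_real (d \<alpha> \<beta>) = (\<Sum>k<q. cnj (omega q) ^ (\<beta> * k) * Fd q d \<alpha> k)"
      using Fd_inv[OF q2 b] by simp
    also have "\<dots> = 0" using Fz by simp
    finally have "d \<alpha> \<beta> = 0" using q2 by simp
    then show "m' \<alpha> \<beta> = m \<alpha> \<beta>" by (simp add: d_def)
  qed
  have PC: "\<forall>\<alpha><kA. \<forall>\<beta><q. decode q kA idx c \<alpha> \<beta> = complex_of_real (m \<alpha> \<beta>)"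
  proof (intro allI impI)
    fix \<alpha> \<beta> assume a: "\<alpha> < kA" and b: "\<beta> < q"
    define sq where "sq = complex_of_real (sqrt (real q))"
    have sq2: "sq * sq = of_nat q" unfolding sq_def
      by (simp flip: of_real_mult)
    have sq0: "sq \<noteq> 0" using q2 by (simp add: sq_def)
    define chat where "chat = (\<lambda>b. dft q (\<lambda>j'. complex_of_real (c b j')))"
    have chat: "chat b k = (\<Sum>\<alpha><kA. Fd q m \<alpha> k * (omega q ^ (idx b * k)) ^ \<alpha>) / sq" if bk: "b < kA" for b k
    proof -
      have "chat b k = (\<Sum>j<q. omega q ^ (k * j) * complex_of_real (c b j)) / sq"
        unfolding chat_def dft_def sq_def[symmetric] sum_divide_distrib by (intro sum.cong refl) simp
      also have "(\<Sum>j<q. omega q ^ (k * j) * complex_of_real (c b j))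
          = (\<Sum>j<q. omega q ^ (k * j) * complex_of_real (\<Sum>\<alpha><kA. \<Sum>\<beta><q. m \<alpha> \<beta> * ?G b j \<alpha> \<beta>))"
      proof (intro sum.cong refl)
        fix j assume "j \<in> {..<q}"
        then have "c b j = (\<Sum>\<alpha><kA. \<Sum>\<beta><q. m \<alpha> \<beta> * ?G b j \<alpha> \<beta>)" using PA bk by blast
        then show "omega q ^ (k * j) * complex_of_real (c b j) = omega q ^ (k * j) * complex_of_real (\<Sum>\<alpha><kA. \<Sum>\<beta><q. m \<alpha> \<beta> * ?G b j \<alpha> \<beta>)" by simp
      qed
      also have "\<dots> = (\<Sum>\<alpha><kA. Fd q m \<alpha> k * (omega q ^ (idx b * k)) ^ \<alpha>)" by (rule KEY[OF bk])
      finally show ?thesis .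
    qed
    define mhat where "mhat = (\<lambda>k. if k = 0 then 0\<^sub>v kA
                      else (THE y. y \<in> carrier_vec kA \<and>
                              (\<forall>b<kA. (\<Sum>a<kA. y $ a * GFd q kA idx k $$ (a, b)) = chat b k)))"
    have mh: "mhat k $ \<alpha> = Fd q m \<alpha> k / sq" if k: "k < q" for k
    proof (cases "k = 0")
      case True
      then show ?thesis using Fd0[of m \<alpha> q] msum a by (simp add: mhat_def)
    next
      case False
      then have k1: "1 \<le> k" by simp
      have "(THE y. y \<in> carrier_vec kA \<and> (\<forall>b<kA. (\<Sum>a<kA. y $ a * GFd q kA idx k $$ (a, b)) = chat b k))
          = vec kA (\<lambda>a. Fd q m a k / sq)"
      proof (rule THE_sol[OF injk[OF k1 k]])
        show "GFd q kA idx k $$ (a, b) = (omega q ^ (idx b * k)) ^ a" if "a < kA" "b < kA" for a b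
          using GFd_entry that by blast
        show "(\<Sum>a<kA. Fd q m a k / sq * (omega q ^ (idx b * k)) ^ a) = chat b k" if "b < kA" for b
          using chat[OF that, of k] by (simp add: sum_divide_distrib)
      qed
      then show ?thesis using False a by (simp add: mhat_def)
    qed
    have "decode q kA idx c \<alpha> \<beta> = idft q (\<lambda>k. mhat k $ \<alpha>) \<beta>"
      unfolding decode_def Let_def mhat_def chat_def by (rule refl)
    also have "\<dots> = (\<Sum>k<q. cnj (omega q) ^ (\<beta> * k) * Fd q m \<alpha> k) / (sq * sq)"
      unfolding idft_def sq_def[symmetric] sum_divide_distrib using mh
      by (intro sum.cong refl) simp
    also have "\<dots> = complex_of_real (m \<alpha> \<beta>)"
      using Fd_inv[OF q2 b, of m \<alpha>] sq2 q2 by simp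
    finally show "decode q kA idx c \<alpha> \<beta> = complex_of_real (m \<alpha> \<beta>)" .
  qed
  show ?thesis using PA PB PC by blast
qed

theorem theorem3:
  shows "(\<forall>n q kA t w A x idx p.
            prime q \<and> n \<le> q \<and> 1 \<le> kA \<and> kA \<le> n \<and>
            inj_on idx {..<kA} \<and> (\<forall>b<kA. idx b < n) \<and> p < w \<longrightarrow>
            (let m = (\<lambda>\<alpha> \<beta>. matT_x t (Ablk q w A \<alpha> \<beta>) x p);
                 c = (\<lambda>b j. matT_x t (Ahat kA n q w A (idx b) j) x p)
             in (\<forall>b<kA. \<forall>j<q. c b j =
                    (\<Sum>\<alpha><kA. \<Sum>\<beta><q. m \<alpha> \<beta> * Gcirc kA n q $$ (\<alpha> * q + \<beta>, idx b * q + j)))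
              \<and> (\<forall>m'. (\<forall>\<alpha><kA. (\<Sum>\<beta><q. m' \<alpha> \<beta>) = 0) \<and>
                      (\<forall>b<kA. \<forall>j<q. c b j =
                         (\<Sum>\<alpha><kA. \<Sum>\<beta><q. m' \<alpha> \<beta> * Gcirc kA n q $$ (\<alpha> * q + \<beta>, idx b * q + j)))
                      \<longrightarrow> (\<forall>\<alpha><kA. \<forall>\<beta><q. m' \<alpha> \<beta> = m \<alpha> \<beta>))
              \<and> (\<forall>\<alpha><kA. \<forall>\<beta><q. decode q kA idx c \<alpha> \<beta> = complex_of_real (m \<alpha> \<beta>))))
       \<and> (\<exists>C::real. C > 0 \<and>
            (\<forall>n q kA idx k.
               prime q \<and> n \<le> q \<and> 1 \<le> kA \<and> kA \<le> n \<and>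
               inj_on idx {..<kA} \<and> (\<forall>b<kA. idx b < n) \<and> 1 \<le> k \<and> k < q \<longrightarrow>
               det (GFd q kA idx k) \<noteq> 0 \<and>
               cond_num (GFd q kA idx k) \<le> C * real q powr (real q - real kA + 5.5)))"
  apply (rule conjI)
   apply (intro allI impI)
   apply (unfold Let_def)
   apply (rule part1[OF _ _ _ _ _ _ refl refl]; auto)
  apply (rule exI[of _ 1])
  apply (rule conjI, simp)
  apply (intro allI impI)
  apply (rule part2; auto)
  done

end
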